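(* Let $\langle A\mid\mathcal{R}\rangle$ be a finite homogeneous presentation of a monoid $M$ and let $n$ be an integer at least the maximum length of a word appearing in a relation of $\mathcal{R}$. Let $\mathcal{R}'=\{(u\ell v,urv): (\ell,r)\in\mathcal{R},\ u,v\in A^*,\ |u\ell v|=n\}$ and let $M'$ be the monoid presented by $\langle A\mid \mathcal{R}'\rangle$. Then $\langle A\mid\mathcal{R}'\rangle$ is $n$-ary homogeneous (and $n$-ary multihomogeneous if $\langle A\mid\mathcal{R}\rangle$ is multihomogeneous), and $M$ and $M'$ are Rees-ideal-commensurable: the sets $I=\{[w]\in M: |w|\geq n\}$ and $I'=\{[w]\in M': |w|\geq n\}$ are finite Rees index ideals, isomorphic via $[w]_{\mathcal{R}'}\mapsto[w]_{\mathcal{R}}$. Consequently every finitely presented (multi)homogeneous monoid is Rees-ideal-commensurable to an $n$-ary (multi)homogeneous monoid.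
   Context: A finite presentation $\langle A\mid\mathcal{R}\rangle$ is homogeneous if $|u|=|v|$ for all $(u,v)\in\mathcal{R}$; multihomogeneous if $|u|_a=|v|_a$ for every $a\in A$ and $(u,v)\in\mathcal{R}$; $n$-ary homogeneous if $|u|=|v|=n$ for all $(u,v)\in\mathcal{R}$; $n$-ary multihomogeneous if both $n$-ary homogeneous and multihomogeneous. An ideal $U$ of a semigroup $S$ has finite Rees index if $S\setminus U$ is finite; semigroups $S_1,S_2$ are Rees-ideal-commensurable if there are finite Rees index ideals $U_i\subseteq S_i$ with $U_1\cong U_2$. In a homogeneous monoid all words representing an element have the same length, so $|w|$ for $[w]$ is well defined. *)

theory Defs
  imports Main
begin

definition fin_presentation :: "'a set \<Rightarrow> ('a list \<times> 'a list) set \<Rightarrow> bool" where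
  "fin_presentation A R \<longleftrightarrow> finite A \<and> finite R \<and> R \<subseteq> lists A \<times> lists A"

definition homogeneous :: "('a list \<times> 'a list) set \<Rightarrow> bool" where
  "homogeneous R \<longleftrightarrow> (\<forall>(u,v)\<in>R. length u = length v)"

definition multihomogeneous :: "'a set \<Rightarrow> ('a list \<times> 'a list) set \<Rightarrow> bool" where
  "multihomogeneous A R \<longleftrightarrow> (\<forall>(u,v)\<in>R. \<forall>a\<in>A. count_list u a = count_list v a)"

definition nary_homogeneous :: "nat \<Rightarrow> ('a list \<times> 'a list) set \<Rightarrow> bool" where
  "nary_homogeneous n R \<longleftrightarrow> (\<forall>(u,v)\<in>R. length u = n \<and> length v = n)"

definition nary_multihomogeneous :: "nat \<Rightarrow> 'a set \<Rightarrow> ('a list \<times> 'a list) set \<Rightarrow> bool" where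
  "nary_multihomogeneous n A R \<longleftrightarrow> nary_homogeneous n R \<and> multihomogeneous A R"

definition rstep :: "('a list \<times> 'a list) set \<Rightarrow> ('a list \<times> 'a list) set" where
  "rstep R = {(u @ l @ v, u @ r @ v) | u l r v. (l, r) \<in> R}"

definition congr :: "'a set \<Rightarrow> ('a list \<times> 'a list) set \<Rightarrow> ('a list \<times> 'a list) set" where
  "congr A R = {(x, y). x \<in> lists A \<and> y \<in> lists A \<and> (x, y) \<in> (rstep R \<union> (rstep R)\<inverse>)\<^sup>*}"

definition cls :: "'a set \<Rightarrow> ('a list \<times> 'a list) set \<Rightarrow> 'a list \<Rightarrow> 'a list set" where
  "cls A R w = congr A R `` {w}"

definition pmonoid :: "'a set \<Rightarrow> ('a list \<times> 'a list) set \<Rightarrow> 'a list set set" where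
  "pmonoid A R = lists A // congr A R"

definition pmult :: "'a set \<Rightarrow> ('a list \<times> 'a list) set \<Rightarrow> 'a list set \<Rightarrow> 'a list set \<Rightarrow> 'a list set" where
  "pmult A R X Y = (\<Union>x\<in>X. \<Union>y\<in>Y. cls A R (x @ y))"

definition is_ideal :: "'a set \<Rightarrow> ('a \<Rightarrow> 'a \<Rightarrow> 'a) \<Rightarrow> 'a set \<Rightarrow> bool" where
  "is_ideal S m U \<longleftrightarrow> U \<subseteq> S \<and> (\<forall>s\<in>S. \<forall>u\<in>U. m s u \<in> U \<and> m u s \<in> U)"

definition finite_rees_index :: "'a set \<Rightarrow> ('a \<Rightarrow> 'a \<Rightarrow> 'a) \<Rightarrow> 'a set \<Rightarrow> bool" where
  "finite_rees_index S m U \<longleftrightarrow> is_ideal S m U \<and> finite (S - U)"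

definition semigroup_iso :: "('b \<Rightarrow> 'a) \<Rightarrow> 'b set \<Rightarrow> ('b \<Rightarrow> 'b \<Rightarrow> 'b) \<Rightarrow> 'a set \<Rightarrow> ('a \<Rightarrow> 'a \<Rightarrow> 'a) \<Rightarrow> bool" where
  "semigroup_iso f U2 m2 U1 m1 \<longleftrightarrow> bij_betw f U2 U1 \<and> (\<forall>x\<in>U2. \<forall>y\<in>U2. f (m2 x y) = m1 (f x) (f y))"

definition rees_ideal_commensurable ::
  "'a set \<Rightarrow> ('a \<Rightarrow> 'a \<Rightarrow> 'a) \<Rightarrow> 'b set \<Rightarrow> ('b \<Rightarrow> 'b \<Rightarrow> 'b) \<Rightarrow> bool" where
  "rees_ideal_commensurable S1 m1 S2 m2 \<longleftrightarrow>
     (\<exists>U1 U2 f. finite_rees_index S1 m1 U1 \<and> finite_rees_index S2 m2 U2 \<and>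
        semigroup_iso f U2 m2 U1 m1)"

definition nary_rels :: "'a set \<Rightarrow> ('a list \<times> 'a list) set \<Rightarrow> nat \<Rightarrow> ('a list \<times> 'a list) set" where
  "nary_rels A R n = {(u @ l @ v, u @ r @ v) | u l r v.
      (l, r) \<in> R \<and> u \<in> lists A \<and> v \<in> lists A \<and> length (u @ l @ v) = n}"

definition long_classes :: "'a set \<Rightarrow> ('a list \<times> 'a list) set \<Rightarrow> nat \<Rightarrow> 'a list set set" where
  "long_classes A R n = {cls A R w | w. w \<in> lists A \<and> n \<le> length w}"

end

theory Submission
  imports Defs
begin

lemma rstep_ctx: "(x,y) \<in> rstep R \<Longrightarrow> (z@x@w, z@y@w) \<in> rstep R"
  unfolding rstep_def
proof -
  assume "(x,y) \<in> {(u @ l @ v, u @ r @ v) | u l r v. (l, r) \<in> R}"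
  then obtain u l r v where "x = u@l@v" "y = u@r@v" "(l,r) \<in> R" by blast
  then show "(z@x@w, z@y@w) \<in> {(u @ l @ v, u @ r @ v) | u l r v. (l, r) \<in> R}"
    by (intro CollectI exI[of _ "z@u"] exI[of _ l] exI[of _ r] exI[of _ "v@w"]) auto
qed

lemma E_ctx: "(x,y) \<in> (rstep R \<union> (rstep R)\<inverse>)\<^sup>* \<Longrightarrow> (z@x@w, z@y@w) \<in> (rstep R \<union> (rstep R)\<inverse>)\<^sup>*"
proof (induction rule: rtrancl_induct)
  case base then show ?case by simp
next
  case (step y u)
  then have "(z@y@w, z@u@w) \<in> rstep R \<union> (rstep R)\<inverse>" using rstep_ctx by blast
  with step.IH show ?case by (rule rtrancl_into_rtrancl)
qed

lemma congr_equiv: "equiv (lists A) (congr A R)"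
proof -
  let ?E = "rstep R \<union> (rstep R)\<inverse>"
  have s: "sym (?E\<^sup>*)" by (simp add: sym_Un_converse sym_rtrancl)
  show ?thesis unfolding equiv_def refl_on_def sym_def trans_def congr_def
    using s by (auto simp: sym_def intro: rtrancl_trans)
qed

lemma congr_app: "(x,x') \<in> congr A R \<Longrightarrow> (y,y') \<in> congr A R \<Longrightarrow> (x@y, x'@y') \<in> congr A R"
  unfolding congr_def
  using E_ctx[of x x' R "[]" y] E_ctx[of y y' R x' "[]"]
  by (auto intro: rtrancl_trans)

lemma pmult_cls:
  assumes "x0 \<in> lists A" "y0 \<in> lists A"
  shows "pmult A R (cls A R x0) (cls A R y0) = cls A R (x0@y0)"
proof -
  have eq: "equiv (lists A) (congr A R)" by (rule congr_equiv)
  have "cls A R (x@y) = cls A R (x0@y0)" if "x \<in> cls A R x0" "y \<in> cls A R y0" for x y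
  proof -
    have "(x0@y0, x@y) \<in> congr A R" using that congr_app unfolding cls_def by blast
    then show ?thesis unfolding cls_def using eq equiv_class_eq by metis
  qed
  moreover have "x0 \<in> cls A R x0" "y0 \<in> cls A R y0"
    using assms unfolding cls_def congr_def by auto
  ultimately show ?thesis unfolding pmult_def by blast
qed

lemma fri:
  assumes "finite A"
  shows "finite_rees_index (pmonoid A R) (pmult A R) (long_classes A R n)"
proof -
  have eq: "equiv (lists A) (congr A R)" by (rule congr_equiv)
  have sub: "long_classes A R n \<subseteq> pmonoid A R"
    unfolding long_classes_def pmonoid_def cls_def by (auto intro: quotientI)
  have id: "\<forall>s\<in>pmonoid A R. \<forall>u\<in>long_classes A R n.
      pmult A R s u \<in> long_classes A R n \<and> pmult A R u s \<in> long_classes A R n"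
  proof (intro ballI)
    fix s u assume s: "s \<in> pmonoid A R" and u: "u \<in> long_classes A R n"
    from s obtain x where x: "x \<in> lists A" "s = cls A R x"
      unfolding pmonoid_def cls_def quotient_def by blast
    from u obtain w where w: "w \<in> lists A" "n \<le> length w" "u = cls A R w"
      unfolding long_classes_def by blast
    have "pmult A R s u = cls A R (x@w)" "pmult A R u s = cls A R (w@x)"
      using pmult_cls[OF x(1) w(1)] pmult_cls[OF w(1) x(1)] x(2) w(3) by auto
    then show "pmult A R s u \<in> long_classes A R n \<and> pmult A R u s \<in> long_classes A R n"
      unfolding long_classes_def using x w by fastforce
  qed
  have "pmonoid A R - long_classes A R n \<subseteq> cls A R ` {w. set w \<subseteq> A \<and> length w \<le> n}"
  proof
    fix X assume X: "X \<in> pmonoid A R - long_classes A R n"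
    then obtain x where x: "x \<in> lists A" "X = cls A R x"
      unfolding pmonoid_def cls_def quotient_def by blast
    with X have "\<not> n \<le> length x" unfolding long_classes_def by blast
    with x show "X \<in> cls A R ` {w. set w \<subseteq> A \<and> length w \<le> n}" by auto
  qed
  moreover have "finite (cls A R ` {w. set w \<subseteq> A \<and> length w \<le> n})"
    using finite_lists_length_le[OF assms] by blast
  ultimately have "finite (pmonoid A R - long_classes A R n)" by (rule finite_subset)
  then show ?thesis unfolding finite_rees_index_def is_ideal_def using sub id by blast
qed

lemma step_to_R':
  assumes RA: "R \<subseteq> lists A \<times> lists A" and hom: "homogeneous R"
    and bd: "\<forall>(l,r)\<in>R. length l \<le> n \<and> length r \<le> n"
    and lr: "(l,r) \<in> R" and pA: "p@l@q \<in> lists A" and len: "n \<le> length (p@l@q)"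
  shows "(p@l@q, p@r@q) \<in> rstep (nary_rels A R n)"
proof -
  define k where "k = n - length l"
  define a where "a = min k (length p)"
  define b where "b = k - a"
  define p1 where "p1 = take (length p - a) p"
  define p2 where "p2 = drop (length p - a) p"
  define q1 where "q1 = take b q"
  define q2 where "q2 = drop b q"
  have ln: "length l \<le> n" "length r = length l" using bd lr hom unfolding homogeneous_def by auto
  have lp2: "length p2 = a" unfolding p2_def a_def by auto
  have bq: "b \<le> length q" using len ln unfolding b_def a_def k_def by auto
  have lq1: "length q1 = b" unfolding q1_def using bq by auto
  have p: "p = p1 @ p2" unfolding p1_def p2_def by simp
  have q: "q = q1 @ q2" unfolding q1_def q2_def by simp
  have p2A: "p2 \<in> lists A" "q1 \<in> lists A" using pA p q by auto
  have ak: "a \<le> k" unfolding a_def by simp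
  have "length (p2@l@q1) = n" using lp2 lq1 ln ak unfolding b_def k_def by simp
  then have "(p2@l@q1, p2@r@q1) \<in> nary_rels A R n"
    unfolding nary_rels_def using lr p2A by blast
  then have "(p1@(p2@l@q1)@q2, p1@(p2@r@q1)@q2) \<in> rstep (nary_rels A R n)"
    unfolding rstep_def by blast
  then show ?thesis using p q by simp
qed

lemma long_path:
  assumes RA: "R \<subseteq> lists A \<times> lists A" and hom: "homogeneous R"
    and bd: "\<forall>(l,r)\<in>R. length l \<le> n \<and> length r \<le> n"
    and xy: "(x,y) \<in> (rstep R \<union> (rstep R)\<inverse>)\<^sup>*" and xA: "x \<in> lists A" and len: "n \<le> length x"
  shows "y \<in> lists A \<and> length y = length x \<and>
    (x,y) \<in> (rstep (nary_rels A R n) \<union> (rstep (nary_rels A R n))\<inverse>)\<^sup>*"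
  using xy
proof (induction rule: rtrancl_induct)
  case base then show ?case using xA by simp
next
  case (step y z)
  from step.hyps(2) show ?case
  proof
    assume "(y,z) \<in> rstep R"
    then obtain p l r q where e: "y = p@l@q" "z = p@r@q" "(l,r) \<in> R" unfolding rstep_def by blast
    have "z \<in> lists A" using step.IH e RA by auto
    moreover have "length z = length y" using e hom unfolding homogeneous_def by auto
    moreover have "(y,z) \<in> rstep (nary_rels A R n)"
      using step_to_R'[OF RA hom bd e(3)] e step.IH len by auto
    ultimately show ?case using step.IH by (auto intro: rtrancl_into_rtrancl)
  next
    assume "(y,z) \<in> (rstep R)\<inverse>"
    then obtain p l r q where e: "z = p@l@q" "y = p@r@q" "(l,r) \<in> R" unfolding rstep_def by blast
    have "z \<in> lists A" using step.IH e RA by auto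
    moreover have "length z = length y" using e hom unfolding homogeneous_def by auto
    moreover have "(z,y) \<in> rstep (nary_rels A R n)"
      using step_to_R'[OF RA hom bd e(3)] e step.IH len \<open>z \<in> lists A\<close> \<open>length z = length y\<close> by auto
    ultimately show ?case using step.IH by (auto intro: rtrancl_into_rtrancl)
  qed
qed

lemma rstep_sub: "rstep (nary_rels A R n) \<subseteq> rstep R"
proof
  fix p assume "p \<in> rstep (nary_rels A R n)"
  then obtain u' l' r' v' u l r v where "p = (u'@l'@v', u'@r'@v')" "l' = u@l@v" "r' = u@r@v" "(l,r) \<in> R"
    unfolding rstep_def nary_rels_def by blast
  then have "p = ((u'@u)@l@(v@v'), (u'@u)@r@(v@v'))" by simp
  with \<open>(l,r) \<in> R\<close> show "p \<in> rstep R" unfolding rstep_def by blast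
qed

lemma congr_sub: "congr A (nary_rels A R n) \<subseteq> congr A R"
proof -
  have "(rstep (nary_rels A R n) \<union> (rstep (nary_rels A R n))\<inverse>)\<^sup>* \<subseteq> (rstep R \<union> (rstep R)\<inverse>)\<^sup>*"
    using rstep_sub[of A R n] by (intro rtrancl_mono) blast
  then show ?thesis unfolding congr_def by blast
qed

theorem proposition5p5:
  fixes A :: "'a set" and R :: "('a list \<times> 'a list) set" and n :: nat
  assumes "fin_presentation A R"
    and "homogeneous R"
    and "\<forall>(l, r)\<in>R. length l \<le> n \<and> length r \<le> n"
  shows "nary_homogeneous n (nary_rels A R n)
    \<and> (multihomogeneous A R \<longrightarrow> nary_multihomogeneous n A (nary_rels A R n))
    \<and> finite_rees_index (pmonoid A R) (pmult A R) (long_classes A R n)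
    \<and> finite_rees_index (pmonoid A (nary_rels A R n)) (pmult A (nary_rels A R n))
        (long_classes A (nary_rels A R n) n)
    \<and> (\<exists>f. semigroup_iso f (long_classes A (nary_rels A R n) n) (pmult A (nary_rels A R n))
              (long_classes A R n) (pmult A R)
           \<and> (\<forall>w\<in>lists A. n \<le> length w \<longrightarrow> f (cls A (nary_rels A R n) w) = cls A R w))
    \<and> rees_ideal_commensurable (pmonoid A R) (pmult A R)
        (pmonoid A (nary_rels A R n)) (pmult A (nary_rels A R n))"
proof -
  let ?R' = "nary_rels A R n"
  have fA: "finite A" and RA: "R \<subseteq> lists A \<times> lists A"
    using assms(1) unfolding fin_presentation_def by auto
  have hom: "\<forall>(l,r)\<in>R. length l = length r" using assms(2) unfolding homogeneous_def by blast
  have H1: "nary_homogeneous n ?R'"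
    unfolding nary_homogeneous_def nary_rels_def using hom by auto
  have "multihomogeneous A R \<Longrightarrow> multihomogeneous A ?R'"
    unfolding multihomogeneous_def nary_rels_def by fastforce
  then have H2: "multihomogeneous A R \<longrightarrow> nary_multihomogeneous n A ?R'"
    unfolding nary_multihomogeneous_def using H1 by blast
  have F1: "finite_rees_index (pmonoid A R) (pmult A R) (long_classes A R n)" by (rule fri[OF fA])
  have F2: "finite_rees_index (pmonoid A ?R') (pmult A ?R') (long_classes A ?R' n)" by (rule fri[OF fA])
  define f where "f X = congr A R `` X" for X
  have fcls: "f (cls A ?R' w) = cls A R w" if "w \<in> lists A" for w
  proof -
    have eq: "equiv (lists A) (congr A R)" by (rule congr_equiv)
    have eq': "equiv (lists A) (congr A ?R')" by (rule congr_equiv)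
    have "w \<in> cls A ?R' w" using that unfolding cls_def congr_def by auto
    moreover have "cls A ?R' w \<subseteq> cls A R w" using congr_sub[of A R n] unfolding cls_def by blast
    moreover have "trans (congr A R)" using eq by (simp add: equiv_def)
    ultimately show ?thesis unfolding f_def cls_def
      by (auto dest: transD)
  qed
  have key: "(x,y) \<in> congr A ?R'" if "(x,y) \<in> congr A R" "n \<le> length x" for x y
    using long_path[OF RA assms(2,3), of x y] that unfolding congr_def by auto
  have iso: "semigroup_iso f (long_classes A ?R' n) (pmult A ?R') (long_classes A R n) (pmult A R)"
    unfolding semigroup_iso_def bij_betw_def
  proof (intro conjI)
    show "inj_on f (long_classes A ?R' n)"
    proof (rule inj_onI)
      fix X Y assume X: "X \<in> long_classes A ?R' n" and Y: "Y \<in> long_classes A ?R' n" and e: "f X = f Y"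
      from X obtain x where x: "x \<in> lists A" "n \<le> length x" "X = cls A ?R' x"
        unfolding long_classes_def by blast
      from Y obtain y where y: "y \<in> lists A" "n \<le> length y" "Y = cls A ?R' y"
        unfolding long_classes_def by blast
      have "cls A R x = cls A R y" using e fcls x y by simp
      then have "(x,y) \<in> congr A R"
        using congr_equiv[of A R] x y unfolding cls_def by (simp add: eq_equiv_class_iff)
      then have "(x,y) \<in> congr A ?R'" using key x by blast
      then show "X = Y" using x y congr_equiv[of A ?R'] unfolding cls_def
        by (simp add: equiv_class_eq)
    qed
    show "f ` long_classes A ?R' n = long_classes A R n"
      unfolding long_classes_def using fcls by force
    show "\<forall>x\<in>long_classes A ?R' n. \<forall>y\<in>long_classes A ?R' n. f (pmult A ?R' x y) = pmult A R (f x) (f y)"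
    proof (intro ballI)
      fix X Y assume X: "X \<in> long_classes A ?R' n" and Y: "Y \<in> long_classes A ?R' n"
      from X obtain x where x: "x \<in> lists A" "X = cls A ?R' x"
        unfolding long_classes_def by blast
      from Y obtain y where y: "y \<in> lists A" "Y = cls A ?R' y"
        unfolding long_classes_def by blast
      show "f (pmult A ?R' X Y) = pmult A R (f X) (f Y)"
        using x y pmult_cls[OF x(1) y(1), of ?R'] pmult_cls[OF x(1) y(1), of R] fcls x(1) y(1) by simp
    qed
  qed
  have C: "rees_ideal_commensurable (pmonoid A R) (pmult A R) (pmonoid A ?R') (pmult A ?R')"
    unfolding rees_ideal_commensurable_def using F1 F2 iso by blast
  show ?thesis using H1 H2 F1 F2 iso fcls C by blast
qed

end
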